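(* Let $m\ge 2$, $\rho\ge 0$, and consider the Mallows culture on candidates $\{1,\dots,m\}$ with reference ranking $(m,m-1,\dots,1)$ (candidate $m$ first) and concentration parameter $\rho$. With $\boldsymbol\beta=(\frac12,\dots,\frac12)$, the log saddle point is \[ \boldsymbol\tau=\Big(\frac{m\rho}{2},\frac{(m-2)\rho}{2},\dots,\frac{(-m+4)\rho}{2}\Big), \] i.e. $\tau_j=\frac{(m-2(j-1))\rho}{2}$ for $j=1,\dots,m-1$.
   Context: Mallows culture with reference ranking $r_0$ and parameter $\rho\ge0$: a ranking $r$ has probability $p_r=\gamma e^{-\rho d(r,r_0)}$ where $d$ is the Kendall tau distance (number of pairs of candidates ordered differently in $r$ and $r_0$) and $\gamma$ normalizes $\sum_rp_r=1$. Let $\mathcal{A}=\{1,\dots,m-1\}$; for $\mathcal{X}\subseteq\mathcal{A}$, $p_{\mathcal{X}}$ is the probability that the set of candidates ranked above $m$ is exactly $\mathcal{X}$, and $P(\mathbf{x})=\sum_{\mathcal{X}\subseteq\mathcal{A}}p_{\mathcal{X}}\prod_{j\in\mathcal{X}}x_j$. With $K(\mathbf{t})=\log P(e^{t_1},\dots,e^{t_{m-1}})$, the log saddle point $\boldsymbol\tau$ is the unique maximizer over $\mathbb{R}^{m-1}$ of $-K(\mathbf{t})+\boldsymbol\beta^T\mathbf{t}$. *)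

theory Defs
  imports Complex_Main "HOL-Combinatorics.Permutations"
begin

text \<open>Candidates are 1..m. A ranking r is a permutation of {1..m}; r c is the
position of candidate c (position 1 = top).\<close>

definition rankings :: "nat \<Rightarrow> (nat \<Rightarrow> nat) set" where
  "rankings m = {r. r permutes {1..m}}"

definition kendall_tau :: "nat \<Rightarrow> (nat \<Rightarrow> nat) \<Rightarrow> (nat \<Rightarrow> nat) \<Rightarrow> nat" where
  "kendall_tau m r s =
     card {(a, b). a \<in> {1..m} \<and> b \<in> {1..m} \<and> a < b \<and> ((r a < r b) \<noteq> (s a < s b))}"

definition mallows_prob :: "nat \<Rightarrow> (nat \<Rightarrow> nat) \<Rightarrow> real \<Rightarrow> (nat \<Rightarrow> nat) \<Rightarrow> real" where
  "mallows_prob m r0 \<rho> r =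
     exp (- \<rho> * real (kendall_tau m r r0)) /
     (\<Sum>s\<in>rankings m. exp (- \<rho> * real (kendall_tau m s r0)))"

definition above_m :: "nat \<Rightarrow> (nat \<Rightarrow> nat) \<Rightarrow> nat set" where
  "above_m m r = {c \<in> {1..m-1}. r c < r m}"

definition p_set :: "nat \<Rightarrow> (nat \<Rightarrow> nat) \<Rightarrow> real \<Rightarrow> nat set \<Rightarrow> real" where
  "p_set m r0 \<rho> X = (\<Sum>r\<in>{r \<in> rankings m. above_m m r = X}. mallows_prob m r0 \<rho> r)"

definition gen_poly :: "nat \<Rightarrow> (nat \<Rightarrow> nat) \<Rightarrow> real \<Rightarrow> (nat \<Rightarrow> real) \<Rightarrow> real" where
  "gen_poly m r0 \<rho> x = (\<Sum>X\<in>Pow {1..m-1}. p_set m r0 \<rho> X * (\<Prod>j\<in>X. x j))"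

definition cgf :: "nat \<Rightarrow> (nat \<Rightarrow> nat) \<Rightarrow> real \<Rightarrow> (nat \<Rightarrow> real) \<Rightarrow> real" where
  "cgf m r0 \<rho> t = ln (gen_poly m r0 \<rho> (\<lambda>j. exp (t j)))"

definition saddle_obj :: "nat \<Rightarrow> (nat \<Rightarrow> nat) \<Rightarrow> real \<Rightarrow> (nat \<Rightarrow> real) \<Rightarrow> (nat \<Rightarrow> real) \<Rightarrow> real" where
  "saddle_obj m r0 \<rho> \<beta> t = - cgf m r0 \<rho> t + (\<Sum>j=1..m-1. \<beta> j * t j)"

text \<open>Reference ranking (m, m-1, ..., 1): candidate c at position m+1-c.\<close>
definition ref_rank :: "nat \<Rightarrow> nat \<Rightarrow> nat" where
  "ref_rank m c = (if c \<in> {1..m} then m + 1 - c else c)"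

end

theory Submission
  imports Defs
begin

definition psi :: "nat \<Rightarrow> nat \<Rightarrow> nat \<Rightarrow> nat" where
  "psi m k p = (if p \<le> k then p + m - k else if p = Suc k then m - k else p - k - 1)"

definition phi :: "nat \<Rightarrow> (nat \<Rightarrow> nat) \<Rightarrow> nat \<Rightarrow> nat" where
  "phi m r c = (if c \<in> {1..m} then psi m (r m - 1) (r c) else c)"

lemma psi_range: "k < m \<Longrightarrow> p \<in> {1..m} \<Longrightarrow> psi m k p \<in> {1..m}"
  unfolding psi_def by auto

lemma psi_invol: "k < m \<Longrightarrow> p \<in> {1..m} \<Longrightarrow> psi m (m - k - 1) (psi m k p) = p"
  unfolding psi_def by auto

lemma psi_bij: assumes "k < m" shows "bij_betw (psi m k) {1..m} {1..m}"
proof (rule bij_betw_byWitness[where f'="psi m (m - k - 1)"])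
  have k': "m - k - 1 < m" and kk: "m - (m - k - 1) - 1 = k" using assms by auto
  show "\<forall>a\<in>{1..m}. psi m (m - k - 1) (psi m k a) = a" using psi_invol assms by blast
  show "\<forall>a\<in>{1..m}. psi m k (psi m (m - k - 1) a) = a" using psi_invol[OF k'] kk by metis
  show "psi m k ` {1..m} \<subseteq> {1..m}" using psi_range assms by blast
  show "psi m (m - k - 1) ` {1..m} \<subseteq> {1..m}" using psi_range k' by blast
qed

lemma ref_rank_perm: "ref_rank m permutes {1..m}"
  apply (rule bij_imp_permutes)
   apply (rule bij_betw_byWitness[where f'="ref_rank m"])
  unfolding ref_rank_def by auto

lemma rank_in: "r \<in> rankings m \<Longrightarrow> c \<in> {1..m} \<Longrightarrow> r c \<in> {1..m}"
  unfolding rankings_def using permutes_in_image[of r "{1..m}" c] by simp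

lemma rank_inj: "r \<in> rankings m \<Longrightarrow> r a = r b \<Longrightarrow> a = b"
proof -
  assume "r \<in> rankings m" "r a = r b"
  then have "inj r" unfolding rankings_def using permutes_inj by blast
  then show "a = b" using \<open>r a = r b\<close> by (rule injD)
qed

lemma phi_in: assumes "m \<ge> 1" "r \<in> rankings m" shows "phi m r \<in> rankings m"
proof -
  have rm: "r m \<in> {1..m}" using rank_in assms by auto
  have k: "r m - 1 < m" using rm by auto
  have b: "bij_betw r {1..m} {1..m}" using assms unfolding rankings_def by (simp add: permutes_imp_bij)
  have "bij_betw (psi m (r m - 1) \<circ> r) {1..m} {1..m}"
    using bij_betw_trans[OF b psi_bij[OF k]] .
  then have "bij_betw (phi m r) {1..m} {1..m}"
    by (rule bij_betw_cong[THEN iffD1, rotated]) (simp add: phi_def)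
  moreover have "phi m r x = x" if "x \<notin> {1..m}" for x unfolding phi_def using that by (rule if_not_P)
  ultimately have "phi m r permutes {1..m}" by (rule bij_imp_permutes)
  then show ?thesis unfolding rankings_def by simp
qed

lemma phi_m: "m \<ge> 1 \<Longrightarrow> r \<in> rankings m \<Longrightarrow> phi m r m = m + 1 - r m"
  using rank_in[of r m m] unfolding phi_def psi_def by auto

lemma phi_invol: assumes "m \<ge> 1" "r \<in> rankings m" shows "phi m (phi m r) = r"
proof
  fix c
  have rm: "r m \<in> {1..m}" using rank_in assms by auto
  show "phi m (phi m r) c = r c"
  proof (cases "c \<in> {1..m}")
    case True
    have "phi m (phi m r) c = psi m (phi m r m - 1) (phi m r c)"
      using True by (simp only: phi_def[of m "phi m r" c] if_True)
    also have "phi m r m = m + 1 - r m" using phi_m assms by blast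
    also have "phi m r c = psi m (r m - 1) (r c)" using True by (simp add: phi_def)
    also have "m + 1 - r m - 1 = m - (r m - 1) - 1" using rm by auto
    also have "psi m (m - (r m - 1) - 1) (psi m (r m - 1) (r c)) = r c"
      using rm rank_in[OF assms(2) True] by (intro psi_invol) auto
    finally show ?thesis .
  next
    case False
    then show ?thesis using assms unfolding rankings_def phi_def permutes_def by auto
  qed
qed

definition Gf :: "nat \<Rightarrow> nat \<Rightarrow> nat \<Rightarrow> real" where
  "Gf pa pb pm = - of_bool (pa < pb) + (of_bool (pa < pm) - of_bool (pb < pm)) / 2"

lemma G_inv:
  assumes "pa \<in> {1..m}" "pb \<in> {1..m}" "pm \<in> {1..m}" "pa \<noteq> pb" "pa \<noteq> pm" "pb \<noteq> pm"
  shows "Gf (psi m (pm - 1) pa) (psi m (pm - 1) pb) (psi m (pm - 1) pm) = Gf pa pb pm"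
proof -
  have pm: "psi m (pm - 1) pm = m + 1 - pm" using assms unfolding psi_def by auto
  have A: "psi m (pm - 1) p = (if p < pm then p + m + 1 - pm else p - pm)" if "p \<in> {1..m}" "p \<noteq> pm" for p
    using that assms(3) unfolding psi_def by auto
  have c1: "(psi m (pm - 1) p < psi m (pm - 1) pm) = (\<not> p < pm)" if "p \<in> {1..m}" "p \<noteq> pm" for p
    unfolding A[OF that] pm using that assms(3) by auto
  have c2: "(psi m (pm - 1) pa < psi m (pm - 1) pb) = (if (pa < pm) = (pb < pm) then pa < pb else pb < pm)"
    unfolding A[OF assms(1,5)] A[OF assms(2,6)] using assms by auto
  show ?thesis unfolding Gf_def c2 c1[OF assms(1,5)] c1[OF assms(2,6)]
    by (cases "pa < pm"; cases "pb < pm"; cases "pa < pb"; simp)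
qed
lemma cnt1: "a \<in> {1..m-1} \<Longrightarrow> (\<Sum>b\<in>{1..m-1}. of_bool (a < b) :: real) = real (m - 1 - a)"
proof -
  assume "a \<in> {1..m-1}"
  then have "{1..m-1} \<inter> {b. a < b} = {a<..m-1}" by auto
  then show ?thesis by simp
qed

lemma cnt2: "b \<in> {1..m-1} \<Longrightarrow> (\<Sum>a\<in>{1..m-1}. of_bool (a < b) :: real) = real (b - 1)"
proof -
  assume "b \<in> {1..m-1}"
  then have "{1..m-1} \<inter> {a. a < b} = {1..<b}" by auto
  then show ?thesis by simp
qed

declare sum_of_bool_eq[simp del] sum_mult_of_bool_eq[simp del] sum_of_bool_mult_eq[simp del]

lemma kt_sum:
  assumes "m \<ge> 1"
  shows "real (kendall_tau m r (ref_rank m)) =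
     (\<Sum>a\<in>{1..m-1}. \<Sum>b\<in>{1..m-1}. of_bool (a < b \<and> r a < r b)) + (\<Sum>a\<in>{1..m-1}. of_bool (r a < r m))"
proof -
  let ?S = "{1..m} \<times> {1..m}"
  have fin: "finite ?S" by blast
  have set: "{(a, b). a \<in> {1..m} \<and> b \<in> {1..m} \<and> a < b \<and> ((r a < r b) \<noteq> (ref_rank m a < ref_rank m b))}
     = {p \<in> ?S. fst p < snd p \<and> r (fst p) < r (snd p)}"
    by (auto simp: ref_rank_def)
  have "real (kendall_tau m r (ref_rank m)) = real (card {p \<in> ?S. fst p < snd p \<and> r (fst p) < r (snd p)})"
    unfolding kendall_tau_def set ..
  also have "{p \<in> ?S. fst p < snd p \<and> r (fst p) < r (snd p)} = ?S \<inter> {p. fst p < snd p \<and> r (fst p) < r (snd p)}"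
    by blast
  also have "real (card \<dots>) = (\<Sum>p\<in>?S. of_bool (fst p < snd p \<and> r (fst p) < r (snd p)))"
    using sum_of_bool_eq[OF fin, of "\<lambda>p. fst p < snd p \<and> r (fst p) < r (snd p)", where 'a=real] by simp
  also have "\<dots> = (\<Sum>a\<in>{1..m}. \<Sum>b\<in>{1..m}. of_bool (a < b \<and> r a < r b))"
    unfolding sum.cartesian_product by (simp add: case_prod_beta)
  also have "{1..m} = insert m {1..m-1}" using assms by auto
  also have "(\<Sum>a\<in>insert m {1..m-1}. \<Sum>b\<in>insert m {1..m-1}. of_bool (a < b \<and> r a < r b) :: real)
     = (\<Sum>a\<in>{1..m-1}. \<Sum>b\<in>{1..m-1}. of_bool (a < b \<and> r a < r b)) + (\<Sum>a\<in>{1..m-1}. of_bool (r a < r m))"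
  proof -
    have "m \<notin> {1..m-1}" using assms by auto
    then have "(\<Sum>a\<in>insert m {1..m-1}. \<Sum>b\<in>insert m {1..m-1}. of_bool (a < b \<and> r a < r b) :: real)
       = (\<Sum>b\<in>insert m {1..m-1}. of_bool (m < b \<and> r m < r b)) +
         (\<Sum>a\<in>{1..m-1}. of_bool (a < m \<and> r a < r m) + (\<Sum>b\<in>{1..m-1}. of_bool (a < b \<and> r a < r b)))"
      by simp
    also have "(\<Sum>b\<in>insert m {1..m-1}. of_bool (m < b \<and> r m < r b) :: real) = 0"
      by (intro sum.neutral) auto
    also have "(\<Sum>a\<in>{1..m-1}. of_bool (a < m \<and> r a < r m) + (\<Sum>b\<in>{1..m-1}. of_bool (a < b \<and> r a < r b)) :: real)
       = (\<Sum>a\<in>{1..m-1}. of_bool (r a < r m)) + (\<Sum>a\<in>{1..m-1}. \<Sum>b\<in>{1..m-1}. of_bool (a < b \<and> r a < r b))"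
      using assms by (auto simp: sum.distrib intro!: sum.cong)
    finally show ?thesis by simp
  qed
  finally show ?thesis .
qed

lemma E_sum:
  fixes \<rho> :: real
  assumes "m \<ge> 1"
  defines "\<tau> \<equiv> (\<lambda>j. (real m - 2 * (real j - 1)) * \<rho> / 2)"
  shows "- \<rho> * real (kendall_tau m r (ref_rank m)) + (\<Sum>j\<in>above_m m r. \<tau> j)
    = \<rho> * (\<Sum>a\<in>{1..m-1}. \<Sum>b\<in>{1..m-1}. of_bool (a < b) * Gf (r a) (r b) (r m))"
proof -
  let ?A = "{1..m-1}"
  let ?I = "\<lambda>j. of_bool (r j < r m) :: real"
  have ab: "(\<Sum>j\<in>above_m m r. \<tau> j) = (\<Sum>j\<in>?A. ?I j * \<tau> j)"
  proof -
    have "above_m m r = ?A \<inter> {j. r j < r m}" unfolding above_m_def by blast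
    then show ?thesis using sum_of_bool_mult_eq[of ?A "\<lambda>j. r j < r m" \<tau>] by simp
  qed
  have s1: "(\<Sum>a\<in>?A. \<Sum>b\<in>?A. of_bool (a < b) * ?I a) = (\<Sum>a\<in>?A. ?I a * real (m - 1 - a))"
    by (intro sum.cong refl) (simp add: sum_distrib_right[symmetric] cnt1[simplified] mult.commute)
  have s2: "(\<Sum>a\<in>?A. \<Sum>b\<in>?A. of_bool (a < b) * ?I b) = (\<Sum>b\<in>?A. ?I b * real (b - 1))"
    by (subst sum.swap, intro sum.cong refl) (simp add: sum_distrib_right[symmetric] cnt2[simplified] mult.commute)
  have "(\<Sum>a\<in>?A. \<Sum>b\<in>?A. of_bool (a < b) * Gf (r a) (r b) (r m))
     = - (\<Sum>a\<in>?A. \<Sum>b\<in>?A. of_bool (a < b \<and> r a < r b))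
       + ((\<Sum>a\<in>?A. \<Sum>b\<in>?A. of_bool (a < b) * ?I a) - (\<Sum>a\<in>?A. \<Sum>b\<in>?A. of_bool (a < b) * ?I b)) / 2"
    unfolding Gf_def
    by (simp add: of_bool_conj sum.distrib sum_subtractf sum_divide_distrib sum_negf algebra_simps diff_divide_distrib)
  also have "\<dots> = - (\<Sum>a\<in>?A. \<Sum>b\<in>?A. of_bool (a < b \<and> r a < r b))
       + (\<Sum>j\<in>?A. ?I j * ((real (m - 1 - j) - real (j - 1)) / 2))"
    unfolding s1 s2 by (simp add: of_bool_conj sum_subtractf[symmetric] sum_divide_distrib algebra_simps)
  finally have H: "(\<Sum>a\<in>?A. \<Sum>b\<in>?A. of_bool (a < b) * Gf (r a) (r b) (r m))
     = - (\<Sum>a\<in>?A. \<Sum>b\<in>?A. of_bool (a < b \<and> r a < r b))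
       + (\<Sum>j\<in>?A. ?I j * ((real (m - 1 - j) - real (j - 1)) / 2))" .
  have G: "\<rho> * (\<Sum>a\<in>?A. \<Sum>b\<in>?A. of_bool (a < b) * Gf (r a) (r b) (r m))
     = \<rho> * (- (\<Sum>a\<in>?A. \<Sum>b\<in>?A. of_bool (a < b \<and> r a < r b)))
       + (\<Sum>j\<in>?A. ?I j * (\<rho> * ((real (m - 1 - j) - real (j - 1)) / 2)))"
    unfolding H distrib_left sum_distrib_left by (simp only: mult.left_commute)
  have pt: "?I j * \<tau> j = ?I j * (\<rho> * ((real (m - 1 - j) - real (j - 1)) / 2)) + \<rho> * ?I j" if "j \<in> ?A" for j
    using that unfolding \<tau>_def by (auto simp: of_nat_diff field_simps)
  have P: "(\<Sum>j\<in>?A. ?I j * \<tau> j) = (\<Sum>j\<in>?A. ?I j * (\<rho> * ((real (m - 1 - j) - real (j - 1)) / 2))) + \<rho> * (\<Sum>j\<in>?A. ?I j)"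
    by (simp only: sum.cong[OF refl pt] sum.distrib sum_distrib_left)
  show ?thesis
    unfolding kt_sum[OF assms(1)] ab G P by (simp add: algebra_simps)
qed

definition Wt :: "nat \<Rightarrow> real \<Rightarrow> (nat \<Rightarrow> real) \<Rightarrow> (nat \<Rightarrow> nat) \<Rightarrow> real" where
  "Wt m \<rho> t r = exp (- \<rho> * real (kendall_tau m r (ref_rank m)) + (\<Sum>j\<in>above_m m r. t j))"

lemma psi_lt_pm: "p \<in> {1..m} \<Longrightarrow> pm \<in> {1..m} \<Longrightarrow> p \<noteq> pm \<Longrightarrow>
   (psi m (pm - 1) p < psi m (pm - 1) pm) = (\<not> p < pm)"
  by (auto simp: psi_def)

lemma phi_A: "j \<in> {1..m-1} \<Longrightarrow> phi m r j = psi m (r m - 1) (r j)"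
  by (auto simp: phi_def)

lemma above_phi:
  assumes "m \<ge> 1" "r \<in> rankings m" "j \<in> {1..m-1}"
  shows "(j \<in> above_m m (phi m r)) = (j \<notin> above_m m r)"
proof -
  have jm: "j \<in> {1..m}" "j \<noteq> m" using assms by auto
  have "phi m r m = psi m (r m - 1) (r m)" using assms by (simp add: phi_def)
  moreover have "(psi m (r m - 1) (r j) < psi m (r m - 1) (r m)) = (\<not> r j < r m)"
    using psi_lt_pm[OF rank_in[OF assms(2) jm(1)] rank_in[OF assms(2)], of m] assms jm rank_inj by auto
  ultimately show ?thesis using assms unfolding above_m_def by (simp add: phi_A)
qed

lemma W_phi:
  fixes \<rho> :: real
  assumes "m \<ge> 1" "r \<in> rankings m"
  defines "\<tau> \<equiv> (\<lambda>j. (real m - 2 * (real j - 1)) * \<rho> / 2)"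
  shows "Wt m \<rho> \<tau> (phi m r) = Wt m \<rho> \<tau> r"
proof -
  let ?A = "{1..m-1}"
  have rm: "r m \<in> {1..m}" using rank_in assms by auto
  have "(\<Sum>a\<in>?A. \<Sum>b\<in>?A. of_bool (a < b) * Gf (phi m r a) (phi m r b) (phi m r m))
      = (\<Sum>a\<in>?A. \<Sum>b\<in>?A. of_bool (a < b) * Gf (r a) (r b) (r m))"
  proof (intro sum.cong refl)
    fix a b assume ab: "a \<in> ?A" "b \<in> ?A"
    show "of_bool (a < b) * Gf (phi m r a) (phi m r b) (phi m r m) = of_bool (a < b) * Gf (r a) (r b) (r m)"
    proof (cases "a < b")
      case True
      have "phi m r m = psi m (r m - 1) (r m)" using assms by (simp add: phi_def)
      moreover have "Gf (psi m (r m - 1) (r a)) (psi m (r m - 1) (r b)) (psi m (r m - 1) (r m)) = Gf (r a) (r b) (r m)"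
        apply (rule G_inv)
        using ab True assms rank_in[OF assms(2)] rank_inj[OF assms(2)] rm
        by (auto, fastforce+)
      ultimately show ?thesis using ab by (simp add: phi_A)
    qed simp
  qed
  then show ?thesis unfolding Wt_def
    using E_sum[OF assms(1), of \<rho> "phi m r"] E_sum[OF assms(1), of \<rho> r] unfolding \<tau>_def by simp
qed

lemma finite_R: "finite (rankings m)"
  unfolding rankings_def by (rule finite_permutations) simp

lemma half:
  fixes \<rho> :: real
  assumes "m \<ge> 1" "j \<in> {1..m-1}"
  defines "\<tau> \<equiv> (\<lambda>j. (real m - 2 * (real j - 1)) * \<rho> / 2)"
  shows "(\<Sum>r\<in>rankings m. Wt m \<rho> \<tau> r * of_bool (j \<in> above_m m r)) = (\<Sum>r\<in>rankings m. Wt m \<rho> \<tau> r) / 2"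
proof -
  let ?R = "rankings m"
  have "(\<Sum>r\<in>?R. Wt m \<rho> \<tau> r * of_bool (j \<in> above_m m r)) = (\<Sum>r\<in>?R. Wt m \<rho> \<tau> r * of_bool (j \<notin> above_m m r))"
  proof (rule sum.reindex_bij_witness[where i="phi m" and j="phi m"])
    fix r assume r: "r \<in> ?R"
    show "phi m (phi m r) = r" using phi_invol[OF assms(1) r] .
    show "phi m r \<in> ?R" using phi_in[OF assms(1) r] .
    show "phi m (phi m r) = r" using phi_invol[OF assms(1) r] .
    show "phi m r \<in> ?R" using phi_in[OF assms(1) r] .
    show "Wt m \<rho> \<tau> (phi m r) * of_bool (j \<notin> above_m m (phi m r)) = Wt m \<rho> \<tau> r * of_bool (j \<in> above_m m r)"
      using W_phi[OF assms(1) r, of \<rho>] above_phi[OF assms(1) r assms(2)] unfolding \<tau>_def by simp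
  qed
  moreover have "(\<Sum>r\<in>?R. Wt m \<rho> \<tau> r * of_bool (j \<in> above_m m r)) + (\<Sum>r\<in>?R. Wt m \<rho> \<tau> r * of_bool (j \<notin> above_m m r))
     = (\<Sum>r\<in>?R. Wt m \<rho> \<tau> r)"
    by (simp only: sum.distrib[symmetric] distrib_left[symmetric]) (auto intro: sum.cong)
  ultimately show ?thesis by simp
qed

lemma gen_poly_eq:
  fixes \<rho> :: real
  assumes "m \<ge> 1"
  shows "gen_poly m (ref_rank m) \<rho> (\<lambda>j. exp (t j)) =
     (\<Sum>r\<in>rankings m. Wt m \<rho> t r) / (\<Sum>s\<in>rankings m. exp (- \<rho> * real (kendall_tau m s (ref_rank m))))"
proof -
  let ?R = "rankings m" and ?A = "{1..m-1}"
  let ?Z = "\<Sum>s\<in>rankings m. exp (- \<rho> * real (kendall_tau m s (ref_rank m)))"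
  let ?f = "\<lambda>r. mallows_prob m (ref_rank m) \<rho> r * (\<Prod>j\<in>above_m m r. exp (t j))"
  have "gen_poly m (ref_rank m) \<rho> (\<lambda>j. exp (t j)) = (\<Sum>X\<in>Pow ?A. \<Sum>r\<in>{r \<in> ?R. above_m m r = X}. ?f r)"
    unfolding gen_poly_def p_set_def sum_distrib_right
    by (intro sum.cong refl) auto
  also have "\<dots> = (\<Sum>r\<in>?R. ?f r)"
    by (rule sum.group) (auto simp: finite_R above_m_def)
  also have "\<dots> = (\<Sum>r\<in>?R. Wt m \<rho> t r / ?Z)"
  proof (intro sum.cong refl)
    fix r assume "r \<in> ?R"
    have fin: "finite (above_m m r)" unfolding above_m_def by simp
    show "?f r = Wt m \<rho> t r / ?Z"
      unfolding mallows_prob_def Wt_def exp_add exp_sum[OF fin] by simp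
  qed
  finally show ?thesis by (simp add: sum_divide_distrib)
qed

lemma exp_strict: fixes x :: real assumes "x \<noteq> 0" shows "1 + x < exp x"
proof (cases "1 + x / 2 \<ge> 0")
  case True
  have "(1 + x/2)^2 \<le> exp (x/2) ^ 2"
    using True exp_ge_add_one_self[of "x/2"] by (intro power_mono) auto
  also have "exp (x/2) ^ 2 = exp x" by (simp add: power2_eq_square exp_add[symmetric])
  finally have "(1 + x/2)^2 \<le> exp x" .
  moreover have "1 + x < (1 + x/2)^2" using assms by (simp add: power2_eq_square algebra_simps) (metis not_real_square_gt_zero)
  ultimately show ?thesis by linarith
next
  case False
  then have "1 + x < 0" by linarith
  then show ?thesis using exp_gt_zero[of x] by linarith
qed

lemma exp_eq_iff: fixes x :: real shows "exp x = 1 + x \<Longrightarrow> x = 0"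
  using exp_strict by force

lemma above_ref: "m \<ge> 1 \<Longrightarrow> above_m m (ref_rank m) = {}"
  unfolding above_m_def ref_rank_def by auto

lemma ref_in: "ref_rank m \<in> rankings m"
  unfolding rankings_def using ref_rank_perm by simp

lemma rj_in: "j \<in> {1..m-1} \<Longrightarrow> ref_rank m \<circ> transpose j m \<in> rankings m"
  unfolding rankings_def mem_Collect_eq
  by (rule permutes_compose[OF permutes_swap_id ref_rank_perm]) auto

lemma above_rj: assumes "m \<ge> 1" "j \<in> {1..m-1}"
  shows "above_m m (ref_rank m \<circ> transpose j m) = {j..m-1}"
  using assms unfolding above_m_def ref_rank_def by (auto simp: transpose_def split: if_splits)

theorem lemma3:
  fixes m :: nat and \<rho> :: real
  assumes "m \<ge> 2" and "\<rho> \<ge> 0"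
  defines "\<tau> \<equiv> (\<lambda>j. (real m - 2 * (real j - 1)) * \<rho> / 2)"
  shows "(\<forall>t. saddle_obj m (ref_rank m) \<rho> (\<lambda>_. 1/2) t
              \<le> saddle_obj m (ref_rank m) \<rho> (\<lambda>_. 1/2) \<tau>)
       \<and> (\<forall>t. saddle_obj m (ref_rank m) \<rho> (\<lambda>_. 1/2) t
              = saddle_obj m (ref_rank m) \<rho> (\<lambda>_. 1/2) \<tau>
              \<longrightarrow> (\<forall>j\<in>{1..m-1}. t j = \<tau> j))"
proof -
  have m1: "m \<ge> 1" using assms by auto
  let ?R = "rankings m" and ?A = "{1..m-1}"
  let ?Z = "\<Sum>s\<in>rankings m. exp (- \<rho> * real (kendall_tau m s (ref_rank m)))"
  define V where "V t = (\<Sum>r\<in>?R. Wt m \<rho> t r)" for t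
  have Rne: "?R \<noteq> {}" using ref_in by blast
  have Zpos: "?Z > 0" by (rule sum_pos[OF finite_R Rne]) simp
  have Wpos: "Wt m \<rho> t r > 0" for t r unfolding Wt_def by simp
  have Vpos: "V t > 0" for t unfolding V_def by (rule sum_pos[OF finite_R Rne]) (rule Wpos)
  have obj: "saddle_obj m (ref_rank m) \<rho> (\<lambda>_. 1/2) t = ln ?Z - ln (V t) + (\<Sum>j\<in>?A. t j) / 2" for t
    unfolding saddle_obj_def cgf_def gen_poly_eq[OF m1] V_def[symmetric]
    using Vpos[of t] Zpos by (simp add: ln_div sum_divide_distrib)
  have key: "V t * exp (- (\<Sum>j\<in>?A. t j - \<tau> j) / 2) - V \<tau> =
     (\<Sum>r\<in>?R. Wt m \<rho> \<tau> r * (exp ((\<Sum>j\<in>above_m m r. t j - \<tau> j) - (\<Sum>j\<in>?A. t j - \<tau> j) / 2) - 1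
        - ((\<Sum>j\<in>above_m m r. t j - \<tau> j) - (\<Sum>j\<in>?A. t j - \<tau> j) / 2)))" for t
  proof -
    define s where "s j = t j - \<tau> j" for j
    define \<sigma> where "\<sigma> = (\<Sum>j\<in>?A. s j)"
    define y where "y r = (\<Sum>j\<in>above_m m r. s j) - \<sigma> / 2" for r
    have fa: "finite (above_m m r)" for r unfolding above_m_def by simp
    have W1: "Wt m \<rho> t r * exp (- \<sigma> / 2) = Wt m \<rho> \<tau> r * exp (y r)" for r
    proof -
      have "(\<Sum>j\<in>above_m m r. t j) = (\<Sum>j\<in>above_m m r. \<tau> j) + (\<Sum>j\<in>above_m m r. s j)"
        unfolding s_def by (simp add: sum.distrib[symmetric])
      then show ?thesis unfolding Wt_def y_def by (simp add: exp_add[symmetric] exp_diff algebra_simps)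
    qed
    have S: "(\<Sum>j\<in>above_m m r. s j) = (\<Sum>j\<in>?A. s j * of_bool (j \<in> above_m m r))" for r
    proof -
      have "above_m m r = ?A \<inter> {j. j \<in> above_m m r}" unfolding above_m_def by auto
      then show ?thesis using sum_mult_of_bool_eq[of ?A s "\<lambda>j. j \<in> above_m m r"] by simp
    qed
    have "(\<Sum>r\<in>?R. Wt m \<rho> \<tau> r * (\<Sum>j\<in>above_m m r. s j))
        = (\<Sum>j\<in>?A. s j * (\<Sum>r\<in>?R. Wt m \<rho> \<tau> r * of_bool (j \<in> above_m m r)))"
      unfolding S sum_distrib_left by (subst sum.swap) (simp add: algebra_simps)
    also have "\<dots> = (\<Sum>j\<in>?A. s j * (V \<tau> / 2))"
      by (intro sum.cong refl) (simp add: half[OF m1, of _ \<rho>, folded \<tau>_def] V_def)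
    also have "\<dots> = \<sigma> / 2 * V \<tau>" unfolding \<sigma>_def by (simp add: sum_distrib_right)
    finally have WS: "(\<Sum>r\<in>?R. Wt m \<rho> \<tau> r * (\<Sum>j\<in>above_m m r. s j)) = \<sigma> / 2 * V \<tau>" .
    have WC: "(\<Sum>r\<in>?R. Wt m \<rho> \<tau> r * (\<sigma> / 2)) = \<sigma> / 2 * V \<tau>"
      unfolding V_def by (simp add: sum_distrib_left mult.commute)
    have WY: "(\<Sum>r\<in>?R. Wt m \<rho> \<tau> r * y r) = 0"
      unfolding y_def right_diff_distrib sum_subtractf WS WC by simp
    have "V t * exp (- \<sigma> / 2) - V \<tau> = (\<Sum>r\<in>?R. Wt m \<rho> \<tau> r * exp (y r)) - V \<tau> - (\<Sum>r\<in>?R. Wt m \<rho> \<tau> r * y r)"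
      unfolding WY V_def sum_distrib_right W1 by simp
    also have "\<dots> = (\<Sum>r\<in>?R. Wt m \<rho> \<tau> r * (exp (y r) - 1 - y r))"
      unfolding V_def by (simp add: sum_subtractf sum.distrib algebra_simps)
    finally show ?thesis unfolding y_def \<sigma>_def s_def .
  qed
  have nonneg: "0 \<le> Wt m \<rho> \<tau> r * (exp x - 1 - x)" for r and x :: real
  proof -
    have "0 \<le> exp x - 1 - x" using exp_ge_add_one_self[of x] by linarith
    then show ?thesis using Wpos[of \<tau> r] by simp
  qed
  have sig: "(\<Sum>j\<in>?A. t j - \<tau> j) = (\<Sum>j\<in>?A. t j) - (\<Sum>j\<in>?A. \<tau> j)" for t
    by (rule sum_subtractf)
  have lnV: "ln (V t * exp (- (\<Sum>j\<in>?A. t j - \<tau> j) / 2)) = ln (V t) - (\<Sum>j\<in>?A. t j - \<tau> j) / 2" for t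
    using Vpos[of t] by (simp add: ln_mult)
  have ineq: "V \<tau> \<le> V t * exp (- (\<Sum>j\<in>?A. t j - \<tau> j) / 2)" for t
  proof -
    have "0 \<le> (\<Sum>r\<in>?R. Wt m \<rho> \<tau> r * (exp ((\<Sum>j\<in>above_m m r. t j - \<tau> j) - (\<Sum>j\<in>?A. t j - \<tau> j) / 2) - 1
        - ((\<Sum>j\<in>above_m m r. t j - \<tau> j) - (\<Sum>j\<in>?A. t j - \<tau> j) / 2)))"
      by (rule sum_nonneg) (rule nonneg)
    then show ?thesis using key[of t] by linarith
  qed
  show ?thesis
  proof (intro conjI allI impI ballI)
    fix t
    have "ln (V \<tau>) \<le> ln (V t) - (\<Sum>j\<in>?A. t j - \<tau> j) / 2"
    proof -
      have pos: "0 < V t * exp (- (\<Sum>j\<in>?A. t j - \<tau> j) / 2)" using Vpos[of t] by simp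
      have "ln (V \<tau>) \<le> ln (V t * exp (- (\<Sum>j\<in>?A. t j - \<tau> j) / 2))"
        using ineq[of t] Vpos[of \<tau>] pos by (simp only: ln_le_cancel_iff)
      then show ?thesis unfolding lnV .
    qed
    then show "saddle_obj m (ref_rank m) \<rho> (\<lambda>_. 1/2) t \<le> saddle_obj m (ref_rank m) \<rho> (\<lambda>_. 1/2) \<tau>"
      unfolding obj sig by (simp add: field_simps)
  next
    fix t j
    assume eq: "saddle_obj m (ref_rank m) \<rho> (\<lambda>_. 1/2) t = saddle_obj m (ref_rank m) \<rho> (\<lambda>_. 1/2) \<tau>"
      and j: "j \<in> ?A"
    define s where "s j = t j - \<tau> j" for j
    define \<sigma> where "\<sigma> = (\<Sum>j\<in>?A. s j)"
    have "ln (V \<tau>) = ln (V t) - \<sigma> / 2"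
      using eq unfolding obj \<sigma>_def s_def sig by (simp add: field_simps)
    then have "ln (V \<tau>) = ln (V t * exp (- \<sigma> / 2))" using lnV[of t] unfolding \<sigma>_def s_def by simp
    then have "V \<tau> = V t * exp (- \<sigma> / 2)"
      using Vpos[of \<tau>] Vpos[of t] by (simp add: ln_inj_iff)
    then have "(\<Sum>r\<in>?R. Wt m \<rho> \<tau> r * (exp ((\<Sum>j\<in>above_m m r. s j) - \<sigma> / 2) - 1
        - ((\<Sum>j\<in>above_m m r. s j) - \<sigma> / 2))) = 0"
      using key[of t] unfolding \<sigma>_def s_def by simp
    then have z: "\<forall>r\<in>?R. Wt m \<rho> \<tau> r * (exp ((\<Sum>j\<in>above_m m r. s j) - \<sigma> / 2) - 1
        - ((\<Sum>j\<in>above_m m r. s j) - \<sigma> / 2)) = 0"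
      by (subst sum_nonneg_eq_0_iff[OF finite_R, symmetric]) (rule nonneg)
    have y0: "(\<Sum>j\<in>above_m m r. s j) = \<sigma> / 2" if "r \<in> ?R" for r
    proof -
      have "exp ((\<Sum>j\<in>above_m m r. s j) - \<sigma> / 2) - 1 - ((\<Sum>j\<in>above_m m r. s j) - \<sigma> / 2) = 0"
        using z that Wpos[of \<tau> r] by fastforce
      then have "exp ((\<Sum>j\<in>above_m m r. s j) - \<sigma> / 2) = 1 + ((\<Sum>j\<in>above_m m r. s j) - \<sigma> / 2)" by linarith
      then have "(\<Sum>j\<in>above_m m r. s j) - \<sigma> / 2 = 0" by (rule exp_eq_iff)
      then show ?thesis by simp
    qed
    have s0: "\<sigma> = 0" using y0[OF ref_in] above_ref[OF m1] by simp
    have tail: "(\<Sum>c\<in>{i..m-1}. s c) = 0" if "i \<in> ?A" for i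
      using y0[OF rj_in[OF that]] above_rj[OF m1 that] s0 by simp
    have "(\<Sum>c\<in>{j..m-1}. s c) = s j + (\<Sum>c\<in>{Suc j..m-1}. s c)"
      using j by (simp add: sum.atLeast_Suc_atMost)
    moreover have "(\<Sum>c\<in>{Suc j..m-1}. s c) = 0"
    proof (cases "Suc j \<le> m - 1")
      case True then show ?thesis using tail[of "Suc j"] by simp
    next
      case False then show ?thesis by simp
    qed
    ultimately have "s j = 0" using tail[OF j] by simp
    then show "t j = \<tau> j" unfolding s_def by simp
  qed
qed

end
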